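(* Let $G$ be a finite subset of $\mathbb{N}^2$ that has at least one connected h-bridge. If $G$ contains a connected component $C$ (of the full grid graph of $G$) such that $C\cap(\mathbb{N}\times\{t_G\})\neq\emptyset$ and $C\cap(\{l_G\}\times\mathbb{N})=\emptyset$, then there exists a point $\vec x_N\in G\setminus C$ such that $N(\vec x_N)\notin G$ and $\vec x_N\notin\mathbb{N}\times\{t_G\}$.
   Context: The full grid graph of $V\subseteq\mathbb{Z}^2$ has vertex set $V$ and an edge between $\vec x,\vec y$ iff $\|\vec x-\vec y\|=1$; paths and connected components are taken in this graph. For a finite $S\subseteq\mathbb{Z}^2$ let $l_S=\min_{(x,y)\in S}x$, $r_S=\max_{(x,y)\in S}x$, $b_S=\min_{(x,y)\in S}y$, $t_S=\max_{(x,y)\in S}y$. An h-bridge of $S$ is a subset of $S$ of the form $\{(l_S,y),(r_S,y)\}$; a v-bridge is a subset of $S$ of the form $\{(x,b_S),(x,t_S)\}$. A bridge is connected if there is a simple path in (the full grid graph of) $S$ connecting its two points. Directions: $N(x,y)=(x,y+1)$, $E(x,y)=(x+1,y)$, $S(x,y)=(x,y-1)$, $W(x,y)=(x-1,y)$. *)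

theory Defs
  imports Main
begin

type_synonym pt = "nat \<times> nat"

definition adj :: "pt \<Rightarrow> pt \<Rightarrow> bool" where
  "adj p q \<longleftrightarrow> (fst p = fst q \<and> (snd p = snd q + 1 \<or> snd q = snd p + 1))
               \<or> (snd p = snd q \<and> (fst p = fst q + 1 \<or> fst q = fst p + 1))"

definition lS :: "pt set \<Rightarrow> nat" where "lS S = Min (fst ` S)"
definition rS :: "pt set \<Rightarrow> nat" where "rS S = Max (fst ` S)"
definition bS :: "pt set \<Rightarrow> nat" where "bS S = Min (snd ` S)"
definition tS :: "pt set \<Rightarrow> nat" where "tS S = Max (snd ` S)"

definition northN :: "pt \<Rightarrow> pt" where "northN p = (fst p, snd p + 1)"

definition simple_path_in :: "pt set \<Rightarrow> pt list \<Rightarrow> pt \<Rightarrow> pt \<Rightarrow> bool" where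
  "simple_path_in S ps p q \<longleftrightarrow> ps \<noteq> [] \<and> hd ps = p \<and> last ps = q \<and> distinct ps
     \<and> set ps \<subseteq> S \<and> (\<forall>i. Suc i < length ps \<longrightarrow> adj (ps ! i) (ps ! Suc i))"

definition connected_in :: "pt set \<Rightarrow> pt \<Rightarrow> pt \<Rightarrow> bool" where
  "connected_in S p q \<longleftrightarrow> (\<exists>ps. simple_path_in S ps p q)"

definition has_connected_hbridge :: "pt set \<Rightarrow> bool" where
  "has_connected_hbridge S \<longleftrightarrow> (\<exists>y. (lS S, y) \<in> S \<and> (rS S, y) \<in> S
      \<and> connected_in S (lS S, y) (rS S, y))"

definition is_component :: "pt set \<Rightarrow> pt set \<Rightarrow> bool" where
  "is_component S C \<longleftrightarrow> (\<exists>p\<in>S. C = {q. connected_in S p q})"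

end

theory Submission imports Defs begin

definition RG :: "pt set \<Rightarrow> pt \<Rightarrow> pt \<Rightarrow> bool" where
  "RG G u v \<longleftrightarrow> u \<in> G \<and> v \<in> G \<and> adj u v"

lemma adj_sym: "adj u v \<Longrightarrow> adj v u" by (auto simp: adj_def)

lemma RG_sym: "(RG G)\<^sup>*\<^sup>* u v \<Longrightarrow> (RG G)\<^sup>*\<^sup>* v u"
proof (induction rule: rtranclp_induct)
  case base then show ?case by simp
next
  case (step y z)
  then have "RG G z y" by (auto simp: RG_def adj_sym)
  then show ?case using step by (meson converse_rtranclp_into_rtranclp)
qed

lemma chain_reach:
  assumes "ps \<noteq> []" "set ps \<subseteq> G" "\<forall>i. Suc i < length ps \<longrightarrow> adj (ps ! i) (ps ! Suc i)"
  shows "\<forall>q\<in>set ps. (RG G)\<^sup>*\<^sup>* (hd ps) q"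
  using assms
proof (induction ps)
  case Nil then show ?case by simp
next
  case (Cons a ps)
  show ?case
  proof (cases ps)
    case Nil then show ?thesis by simp
  next
    case (Cons b qs)
    have ih: "\<forall>q\<in>set ps. (RG G)\<^sup>*\<^sup>* (hd ps) q"
    proof (rule Cons.IH)
      show "ps \<noteq> []" using Cons by simp
      show "set ps \<subseteq> G" using Cons.prems by simp
      show "\<forall>i. Suc i < length ps \<longrightarrow> adj (ps ! i) (ps ! Suc i)"
        using Cons.prems(3) by (metis Suc_less_eq length_Cons nth_Cons_Suc)
    qed
    have "adj ((a#ps)!0) ((a#ps)! Suc 0)" using Cons.prems(3) Cons by (metis length_Cons zero_less_Suc Suc_less_eq)
    then have "RG G a b" using Cons.prems Cons unfolding RG_def by auto
    then show ?thesis using ih Cons by (auto intro: converse_rtranclp_into_rtranclp)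
  qed
qed

lemma conn_reach: "connected_in G p q \<Longrightarrow> (RG G)\<^sup>*\<^sup>* p q \<and> p \<in> G \<and> q \<in> G"
  unfolding connected_in_def simple_path_in_def
  using chain_reach by (metis hd_in_set last_in_set subsetD)

lemma reach_conn:
  assumes "(RG G)\<^sup>*\<^sup>* p q" "p \<in> G" shows "connected_in G p q"
  using assms(1)
proof (induction rule: rtranclp_induct)
  case base
  have "simple_path_in G [p] p p" using assms(2) by (simp add: simple_path_in_def)
  then show ?case by (auto simp: connected_in_def)
next
  case (step u v)
  then obtain ps where ps: "simple_path_in G ps p u" by (auto simp: connected_in_def)
  show ?case
  proof (cases "v \<in> set ps")
    case True
    then obtain i where i: "i < length ps" "ps ! i = v" by (meson in_set_conv_nth)
    have "simple_path_in G (take (Suc i) ps) p v"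
      using ps i unfolding simple_path_in_def
      apply (intro conjI)
           apply simp
          apply (simp add: hd_take)
         apply (simp add: take_Suc_conv_app_nth)
        apply simp
       apply (meson in_set_takeD subset_iff)
      apply simp
      done
    then show ?thesis by (auto simp: connected_in_def)
  next
    case False
    have "simple_path_in G (ps @ [v]) p v"
      using ps False step(2) unfolding simple_path_in_def RG_def
      apply (auto simp: nth_append)
      by (metis One_nat_def Suc_lessI diff_Suc_1 last_conv_nth less_nat_zero_code list.size(3))
    then show ?thesis by (auto simp: connected_in_def)
  qed
qed

lemma column_hit:
  assumes "ps \<noteq> []" "\<forall>i. Suc i < length ps \<longrightarrow> adj (ps ! i) (ps ! Suc i)"
    "fst (hd ps) \<le> a" "a \<le> fst (last ps)"
  shows "\<exists>q\<in>set ps. fst q = a"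
  using assms
proof (induction ps)
  case Nil then show ?case by simp
next
  case (Cons x ps)
  show ?case
  proof (cases "fst x = a")
    case True then show ?thesis by simp
  next
    case False
    show ?thesis
    proof (cases ps)
      case Nil then show ?thesis using Cons.prems False by simp
    next
      case (Cons b qs)
      have adjxb: "adj x b" using Cons.prems(2) Cons by (metis length_Cons nth_Cons_0 nth_Cons_Suc zero_less_Suc Suc_less_eq)
      have "fst b \<le> a" using adjxb False Cons.prems(3) by (auto simp: adj_def)
      moreover have "\<forall>i. Suc i < length ps \<longrightarrow> adj (ps ! i) (ps ! Suc i)"
        using Cons.prems(2) by (metis Suc_less_eq length_Cons nth_Cons_Suc)
      ultimately have "\<exists>q\<in>set ps. fst q = a" using Cons.IH Cons.prems Cons by auto
      then show ?thesis by simp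
    qed
  qed
qed

theorem mainTheorem3:
  fixes G C :: "(nat \<times> nat) set"
  assumes "finite G"
    and "has_connected_hbridge G"
    and "is_component G C"
    and "C \<inter> {p. snd p = tS G} \<noteq> {}"
    and "C \<inter> {p. fst p = lS G} = {}"
  shows "\<exists>x\<in>G - C. northN x \<notin> G \<and> snd x \<noteq> tS G"
proof (rule ccontr)
  assume H: "\<not> (\<exists>x\<in>G - C. northN x \<notin> G \<and> snd x \<noteq> tS G)"
  obtain y ps where y: "(lS G, y) \<in> G" "(rS G, y) \<in> G" and ps: "simple_path_in G ps (lS G, y) (rS G, y)"
    using assms(2) unfolding has_connected_hbridge_def connected_in_def by blast
  obtain p where p: "p \<in> G" "C = {q. connected_in G p q}" using assms(3) unfolding is_component_def by blast
  obtain c where c: "c \<in> C" "snd c = tS G" using assms(4) by blast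
  define a where "a = fst c"
  have "connected_in G p c" using c(1) p(2) by simp
  then have cG: "c \<in> G" using conn_reach by simp
  have la: "lS G \<le> a" unfolding lS_def a_def by (rule Min_le[OF finite_imageI[OF assms(1)] imageI[OF cG]])
  have ar: "a \<le> rS G" unfolding rS_def a_def by (rule Max_ge[OF finite_imageI[OF assms(1)] imageI[OF cG]])
  have tmax: "snd z \<le> tS G" if "z \<in> G" for z unfolding tS_def by (rule Max_ge[OF finite_imageI[OF assms(1)] imageI[OF that]])
  have ps1: "ps \<noteq> []" "hd ps = (lS G, y)" "last ps = (rS G, y)" "set ps \<subseteq> G"
     "\<forall>i. Suc i < length ps \<longrightarrow> adj (ps ! i) (ps ! Suc i)"
    using ps unfolding simple_path_in_def by simp_all
  obtain q where q: "q \<in> set ps" "fst q = a"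
    using column_hit[OF ps1(1) ps1(5)] ps1(2,3) la ar by fastforce
  have reachq: "(RG G)\<^sup>*\<^sup>* (lS G, y) q"
    using chain_reach[OF ps1(1) ps1(4) ps1(5)] ps1(2) q(1) by simp
  have qG: "q \<in> G" using q ps1(4) by blast
  have notC: "z \<notin> C" if "(RG G)\<^sup>*\<^sup>* (lS G, y) z" for z
  proof
    assume "z \<in> C"
    then have "connected_in G p z" using p(2) by simp
    then have "(RG G)\<^sup>*\<^sup>* p z" using conn_reach by simp
    moreover have "(RG G)\<^sup>*\<^sup>* z (lS G, y)" using RG_sym[OF that] .
    ultimately have "(RG G)\<^sup>*\<^sup>* p (lS G, y)" by (rule rtranclp_trans)
    then have "connected_in G p (lS G, y)" using reach_conn p(1) by simp
    then have "(lS G, y) \<in> C" using p(2) by blast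
    then have "(lS G, y) \<in> C \<inter> {p. fst p = lS G}" by simp
    then show False using assms(5) by simp
  qed
  define y0 where "y0 = snd q"
  have y0t: "y0 \<le> tS G" using tmax qG y0_def by simp
  have ind: "k \<le> tS G - y0 \<Longrightarrow> (a, y0 + k) \<in> G \<and> (RG G)\<^sup>*\<^sup>* (lS G, y) (a, y0 + k)" for k
  proof (induction k)
    case 0
    have "q = (a, y0)" using q y0_def by (cases q) auto
    then show ?case using qG reachq by simp
  next
    case (Suc k)
    then have IH: "(a, y0 + k) \<in> G" "(RG G)\<^sup>*\<^sup>* (lS G, y) (a, y0 + k)" by simp_all
    have "(a, y0 + k) \<notin> C" using notC IH by blast
    moreover have "snd (a, y0 + k) \<noteq> tS G" using Suc.prems by simp
    ultimately have "northN (a, y0 + k) \<in> G" using H IH(1) by blast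
    then have N: "(a, y0 + Suc k) \<in> G" unfolding northN_def by simp
    then have "RG G (a, y0 + k) (a, y0 + Suc k)" using IH unfolding RG_def adj_def by simp
    then show ?case using N IH by (meson rtranclp.rtrancl_into_rtrancl)
  qed
  have "c = (a, y0 + (tS G - y0))" using c a_def y0t by (cases c) auto
  then have "(RG G)\<^sup>*\<^sup>* (lS G, y) c" using ind[of "tS G - y0"] by simp
  then show False using notC c by blast
qed

end
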